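(* Let $k\ge 2$ and $\mathcal{M}=\{M_1,\dots,M_k\}\subseteq\mathbb{S}^n$. Suppose that for all distinct indices $i,j\in\{1,\dots,k\}$ there exists $(\alpha,\beta)\neq(0,0)$ such that $\alpha M_i+\beta M_j$ is positive semidefinite. Then $\mathcal{S}(\mathcal{M})=\{X\in\mathbb{S}^n_+:\langle M_i,X\rangle\ge 0\ \forall i\in\{1,\dots,k\}\}$ is rank-one generated.
   Context: $\mathbb{S}^n$ is the space of real symmetric $n\times n$ matrices with $\langle A,B\rangle=\mathrm{tr}(AB)$, and $\mathbb{S}^n_+$ the PSD cone. A closed convex cone $\mathcal{S}\subseteq\mathbb{S}^n_+$ is rank-one generated (ROG) if $\mathcal{S}=\mathrm{conv}(\mathcal{S}\cap\{xx^\top:x\in\mathbb{R}^n\})$. *)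

theory Defs
  imports "HOL-Analysis.Analysis"
begin

text \<open>Real symmetric n x n matrices, with n encoded by the finite index type 'n.\<close>
definition sym_mat :: "real^'n^'n \<Rightarrow> bool" where
  "sym_mat A \<longleftrightarrow> transpose A = A"

definition psd :: "real^'n^'n \<Rightarrow> bool" where
  "psd A \<longleftrightarrow> sym_mat A \<and> (\<forall>x. 0 \<le> x \<bullet> (A *v x))"

definition psd_cone :: "(real^'n^'n) set" where
  "psd_cone = {A. psd A}"

definition mat_inner :: "real^'n^'n \<Rightarrow> real^'n^'n \<Rightarrow> real" where
  "mat_inner A B = trace (A ** B)"

definition outer :: "real^'n \<Rightarrow> real^'n^'n" where
  "outer x = (\<chi> i j. x $ i * x $ j)"

definition rog :: "(real^'n^'n) set \<Rightarrow> bool" where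
  "rog S \<longleftrightarrow> closed S \<and> convex S \<and> cone S \<and> S \<subseteq> psd_cone \<and>
     S = convex hull (S \<inter> range outer)"

definition S_of :: "nat \<Rightarrow> (nat \<Rightarrow> real^'n^'n) \<Rightarrow> (real^'n^'n) set" where
  "S_of k M = {X \<in> psd_cone. \<forall>i\<in>{1..k}. 0 \<le> mat_inner (M i) X}"

end

theory Submission
  imports Defs
begin

lemma q_lin: fixes A B :: "real^'n^'n"
  shows "x \<bullet> ((a *\<^sub>R A + b *\<^sub>R B) *v x) = a * (x \<bullet> (A *v x)) + b * (x \<bullet> (B *v x))"
  by (simp add: matrix_vector_mult_add_rdistrib inner_add_right flip: scaleR_matrix_vector_assoc)
lemma sym_swap: fixes M :: "real^'n^'n" assumes "sym_mat M" shows "x \<bullet> (M *v y) = y \<bullet> (M *v x)"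
proof -
  have "x \<bullet> (M *v y) = (x v* M) \<bullet> y" by (simp add: dot_lmul_matrix)
  also have "\<dots> = (transpose M *v x) \<bullet> y" by (simp add: vector_transpose_matrix[symmetric])
  also have "\<dots> = y \<bullet> (M *v x)" using assms by (simp add: sym_mat_def inner_commute)
  finally show ?thesis .
qed
lemma q_add: fixes M :: "real^'n^'n" assumes "sym_mat M"
  shows "(a + b) \<bullet> (M *v (a + b)) = a \<bullet> (M *v a) + 2 * (a \<bullet> (M *v b)) + b \<bullet> (M *v b)"
  using sym_swap[OF assms, of a b] by (simp add: matrix_vector_right_distrib inner_add_left inner_add_right)
lemma q_scale: fixes M :: "real^'n^'n"
  shows "(c *\<^sub>R a) \<bullet> (M *v (c *\<^sub>R a)) = c^2 * (a \<bullet> (M *v a))"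
  by (simp add: matrix_vector_mult_scaleR power2_eq_square)
lemma q_axis: fixes M :: "real^'n^'n" shows "axis i 1 \<bullet> (M *v axis j 1) = M $ i $ j"
  by (simp add: matrix_vector_mult_basis inner_axis' column_def)
lemma mv_neg: fixes M :: "real^'n^'n" shows "M *v (-v) = -(M *v v)"
  by (simp add: matrix_vector_mult_def vec_eq_iff sum_negf)
lemma psd_diag: fixes X :: "real^'n^'n" assumes "psd X" shows "0 \<le> X $ i $ i"
  using assms q_axis[of i X i] unfolding psd_def by metis
lemma psd_off: fixes X :: "real^'n^'n" assumes "psd X" shows "2 * \<bar>X $ i $ j\<bar> \<le> X $ i $ i + X $ j $ j"
proof -
  have s: "sym_mat X" using assms psd_def by auto
  have 1: "0 \<le> (axis i 1 + axis j 1) \<bullet> (X *v (axis i 1 + axis j 1))" using assms psd_def by auto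
  have 2: "0 \<le> (axis i 1 + (-1) *\<^sub>R axis j 1) \<bullet> (X *v (axis i 1 + (-1) *\<^sub>R axis j 1))" using assms psd_def by blast
  have e1: "(axis i 1 + axis j 1) \<bullet> (X *v (axis i 1 + axis j 1)) = X$i$i + 2 * X$i$j + X$j$j"
    by (simp add: q_add[OF s] q_axis)
  have e2: "(axis i 1 + (-1) *\<^sub>R axis j 1) \<bullet> (X *v (axis i 1 + (-1) *\<^sub>R axis j 1)) = X$i$i - 2 * X$i$j + X$j$j"
    unfolding q_add[OF s] q_scale by (simp add: matrix_vector_mult_scaleR q_axis mv_neg)
  show ?thesis using 1 2 e1 e2 by linarith
qed
lemma psd_outer: "psd (outer x)"
  unfolding psd_def sym_mat_def
proof
  show "transpose (outer x) = outer x" unfolding outer_def transpose_def by (simp add: vec_eq_iff mult_ac)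
  show "\<forall>y. 0 \<le> y \<bullet> (outer x *v y)"
  proof
    fix y
    have "y \<bullet> (outer x *v y) = (x \<bullet> y)^2"
      unfolding outer_def matrix_vector_mult_def inner_vec_def power2_eq_square
      by (simp add: sum_distrib_left sum_distrib_right mult_ac)
    then show "0 \<le> y \<bullet> (outer x *v y)" by simp
  qed
qed
lemma psd_add: fixes A B :: "real^'n^'n" shows "psd A \<Longrightarrow> psd B \<Longrightarrow> psd (A + B)"
  unfolding psd_def sym_mat_def
proof (elim conjE, intro conjI)
  assume "transpose A = A" "transpose B = B"
  moreover have "transpose (A+B) = transpose A + transpose B" by (simp add: transpose_def vec_eq_iff)
  ultimately show "transpose (A+B) = A + B" by simp
next
  assume "\<forall>x. 0 \<le> x \<bullet> (A *v x)" "\<forall>x. 0 \<le> x \<bullet> (B *v x)"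
  then show "\<forall>x. 0 \<le> x \<bullet> ((A + B) *v x)"
    by (simp add: matrix_vector_mult_add_rdistrib inner_add_right add_nonneg_nonneg)
qed
lemma psd_scale: fixes A :: "real^'n^'n" shows "psd A \<Longrightarrow> 0 \<le> c \<Longrightarrow> psd (c *\<^sub>R A)"
  unfolding psd_def sym_mat_def
  by (simp only: transpose_scalar flip: scaleR_matrix_vector_assoc) (simp add: inner_scaleR_right)
lemma psd_zero: "psd (0::real^'n^'n)"
  unfolding psd_def sym_mat_def by (simp add: transpose_def vec_eq_iff)
lemma psd_sum_list: "psd (sum_list (map outer xs))"
  by (induction xs) (auto simp: psd_zero psd_add psd_outer)

lemma mat_inner_outer: "mat_inner M (outer x) = x \<bullet> (M *v x)"
  unfolding mat_inner_def trace_def outer_def matrix_matrix_mult_def matrix_vector_mult_def inner_vec_def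
  by (simp add: sum_distrib_left mult_ac)
lemma mat_inner_add: "mat_inner M (A + B) = mat_inner M A + mat_inner M B"
  unfolding mat_inner_def by (simp add: matrix_add_ldistrib trace_add)
lemma mat_inner_scale: "mat_inner M (c *\<^sub>R A) = c * mat_inner M A"
  unfolding mat_inner_def trace_def matrix_matrix_mult_def
  by (simp add: sum_distrib_left mult_ac)
lemma mat_inner_zero: "mat_inner M 0 = 0"
  unfolding mat_inner_def trace_def matrix_matrix_mult_def by simp
lemma trace_outer: "trace (outer x) = x \<bullet> x"
  unfolding trace_def outer_def inner_vec_def by simp
lemma trace_scale: "trace (c *\<^sub>R A) = c * trace A"
  unfolding trace_def by (simp add: sum_distrib_left)
lemma trace_zero: "trace (0::real^'n^'n) = 0"
  unfolding trace_def by simp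
lemma outer_scale: "outer (c *\<^sub>R x) = (c^2) *\<^sub>R outer x"
  unfolding outer_def by (simp add: vec_eq_iff power2_eq_square mult_ac)
lemma outer_zero: "outer 0 = 0"
  unfolding outer_def by (simp add: vec_eq_iff)
lemma mat_inner_sum_list: "mat_inner M (sum_list (map outer xs)) = sum_list (map (\<lambda>x. x \<bullet> (M *v x)) xs)"
  by (induction xs) (simp_all add: mat_inner_zero mat_inner_add mat_inner_outer)
lemma trace_sum_list: "trace (sum_list (map outer xs)) = sum_list (map (\<lambda>x. x \<bullet> x) xs)"
  by (induction xs) (simp_all add: trace_zero trace_add trace_outer)

lemma psd_cs: fixes A :: "real^'n^'n" assumes "psd A"
  shows "(x \<bullet> (A *v y))^2 \<le> (x \<bullet> (A *v x)) * (y \<bullet> (A *v y))"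
proof -
  have s: "sym_mat A" using assms psd_def by auto
  define b where "b = x \<bullet> (A *v y)"
  define qx where "qx = x \<bullet> (A *v x)"
  define qy where "qy = y \<bullet> (A *v y)"
  have f: "0 \<le> qx + 2 * t * b + t^2 * qy" for t
  proof -
    have "0 \<le> (x + t *\<^sub>R y) \<bullet> (A *v (x + t *\<^sub>R y))" using assms psd_def by blast
    also have "\<dots> = qx + 2 * t * b + t^2 * qy"
      unfolding q_add[OF s] q_scale qx_def qy_def b_def
      by (simp add: matrix_vector_mult_scaleR)
    finally show ?thesis .
  qed
  have qy0: "0 \<le> qy" using assms psd_def qy_def by blast
  show ?thesis
  proof (cases "qy = 0")
    case True
    have "b = 0"
    proof (rule ccontr)
      assume "b \<noteq> 0"
      have "0 \<le> qx + 2 * (-(qx+1)/(2*b)) * b + (-(qx+1)/(2*b))^2 * qy" by (rule f)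
      with True \<open>b \<noteq> 0\<close> show False by (simp add: field_simps)
    qed
    then show ?thesis using True qx_def b_def qy_def by simp
  next
    case False
    then have qp: "0 < qy" using qy0 by simp
    have "0 \<le> qx + 2 * (-b/qy) * b + (-b/qy)^2 * qy" by (rule f)
    then have "0 \<le> qx - b^2/qy" using qp by (simp add: field_simps power2_eq_square)
    then have "b^2 \<le> qx * qy" using qp by (simp add: field_simps)
    then show ?thesis using b_def qx_def qy_def by simp
  qed
qed

lemma psd_zero_diag: fixes X :: "real^'n^'n" assumes "psd X" "\<forall>i. X$i$i = 0" shows "X = 0"
proof -
  have "X$i$j = 0" for i j using psd_off[OF assms(1), of i j] assms(2) by simp
  then show ?thesis by (simp add: vec_eq_iff)
qed

lemma psd_peel: fixes X :: "real^'n^'n" assumes "psd X" "X$i$i \<noteq> 0"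
  shows "\<exists>v. psd (X - outer v) \<and> {j. (X - outer v)$j$j \<noteq> 0} \<subset> {j. X$j$j \<noteq> 0}"
proof -
  define d where "d = X$i$i"
  have dp: "0 < d" using psd_diag[OF assms(1), of i] assms(2) d_def by simp
  have s: "sym_mat X" using assms psd_def by auto
  have xs: "X$j$k = X$k$j" for j k using s unfolding sym_mat_def
    by (metis transpose_def vec_lambda_beta)
  define c where "c = X *v axis i 1"
  define v where "v = (1 / sqrt d) *\<^sub>R c"
  have cj: "c$j = X$j$i" for j unfolding c_def by (simp add: matrix_vector_mult_basis column_def)
  have vj: "v$j = X$j$i / sqrt d" for j unfolding v_def by (simp add: cj)
  have dd: "sqrt d * sqrt d = d" using dp by simp
  have Yjj: "(X - outer v)$j$j = X$j$j - (X$j$i)^2 / d" for j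
    unfolding outer_def using vj dd by (simp add: power2_eq_square field_simps)
  have vy: "v \<bullet> y = (y \<bullet> (X *v axis i 1)) / sqrt d" for y
    unfolding v_def c_def by (simp add: inner_commute)
  have psdY: "psd (X - outer v)"
    unfolding psd_def sym_mat_def
  proof (intro conjI allI)
    show "transpose (X - outer v) = X - outer v"
      unfolding transpose_def outer_def by (simp add: vec_eq_iff xs mult.commute)
    fix y
    have e: "y \<bullet> (outer v *v y) = (v \<bullet> y)^2"
      unfolding outer_def matrix_vector_mult_def inner_vec_def power2_eq_square
      by (simp add: sum_distrib_left sum_distrib_right mult_ac)
    have "y \<bullet> ((X - outer v) *v y) = y \<bullet> (X *v y) - (v \<bullet> y)^2"
      by (simp add: matrix_vector_mult_diff_rdistrib inner_diff_right e)
    moreover have "(v \<bullet> y)^2 = (y \<bullet> (X *v axis i 1))^2 / d"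
      using vy dp by (simp add: power_divide)
    moreover have "(y \<bullet> (X *v axis i 1))^2 \<le> (y \<bullet> (X *v y)) * d"
      using psd_cs[OF assms(1), of y "axis i 1"] q_axis[of i X i] d_def by simp
    then have "(y \<bullet> (X *v axis i 1))^2 / d \<le> y \<bullet> (X *v y)"
      using dp by (simp add: divide_le_eq)
    ultimately show "0 \<le> y \<bullet> ((X - outer v) *v y)" by simp
  qed
  have sub: "{j. (X - outer v)$j$j \<noteq> 0} \<subseteq> {j. X$j$j \<noteq> 0} - {i}"
  proof
    fix j assume "j \<in> {j. (X - outer v)$j$j \<noteq> 0}"
    then have nz: "(X - outer v)$j$j \<noteq> 0" by simp
    have Yi: "(X - outer v)$i$i = 0" using Yjj[of i] dp unfolding d_def[symmetric] by (simp add: power2_eq_square)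
    have "j \<noteq> i" using nz Yi by auto
    moreover have "X$j$j \<noteq> 0"
    proof
      assume "X$j$j = 0"
      then have "(X - outer v)$j$j \<le> 0" using Yjj[of j] dp by simp
      with psd_diag[OF psdY, of j] nz show False by simp
    qed
    ultimately show "j \<in> {j. X$j$j \<noteq> 0} - {i}" by simp
  qed
  have "{j. (X - outer v)$j$j \<noteq> 0} \<subset> {j. X$j$j \<noteq> 0}"
    using sub assms(2) by blast
  with psdY show ?thesis by blast
qed

lemma psd_decomp: fixes X :: "real^'n^'n" assumes "psd X"
  shows "\<exists>xs. X = sum_list (map outer xs)"
proof -
  have "\<forall>X::real^'n^'n. psd X \<and> card {j. X$j$j \<noteq> 0} = n \<longrightarrow> (\<exists>xs. X = sum_list (map outer xs))" for n
  proof (induction n rule: less_induct)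
    case (less n)
    show ?case
    proof (intro allI impI)
      fix X :: "real^'n^'n" assume a: "psd X \<and> card {j. X$j$j \<noteq> 0} = n"
      show "\<exists>xs. X = sum_list (map outer xs)"
      proof (cases "\<forall>i. X$i$i = 0")
        case True
        then have "X = 0" using psd_zero_diag a by blast
        then show ?thesis by (intro exI[of _ "[]"]) simp
      next
        case False
        then obtain i where "X$i$i \<noteq> 0" by blast
        then obtain v where v: "psd (X - outer v)" "{j. (X - outer v)$j$j \<noteq> 0} \<subset> {j. X$j$j \<noteq> 0}"
          using psd_peel a by blast
        have "card {j. (X - outer v)$j$j \<noteq> 0} < card {j. X$j$j \<noteq> 0}"
          by (rule psubset_card_mono[OF _ v(2)]) simp
        then have "card {j. (X - outer v)$j$j \<noteq> 0} < n" using a by simp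
        then obtain ys where "X - outer v = sum_list (map outer ys)" using less v(1) by blast
        then have "X = sum_list (map outer (v # ys))" by (simp add: algebra_simps)
        then show ?thesis by blast
      qed
    qed
  qed
  then show ?thesis using assms by blast
qed

lemma outer_rot0: "outer (a + t *\<^sub>R b) + outer (b - t *\<^sub>R a) = (1 + t^2) *\<^sub>R (outer a + outer b)"
  unfolding outer_def by (simp add: vec_eq_iff algebra_simps power2_eq_square)
lemma outer_rot: "outer ((1/sqrt(1+t^2)) *\<^sub>R (a + t *\<^sub>R b)) + outer ((1/sqrt(1+t^2)) *\<^sub>R (b - t *\<^sub>R a)) = outer a + outer b"
proof -
  have p: "0 < 1 + t^2" by (simp add: add_pos_nonneg)
  have c2: "(1/sqrt(1+t^2))^2 = 1/(1+t^2)" using p by (simp add: power_divide)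
  have "outer ((1/sqrt(1+t^2)) *\<^sub>R (a + t *\<^sub>R b)) + outer ((1/sqrt(1+t^2)) *\<^sub>R (b - t *\<^sub>R a))
     = (1/(1+t^2)) *\<^sub>R (outer (a + t *\<^sub>R b) + outer (b - t *\<^sub>R a))"
    by (simp only: outer_scale c2) (rule scaleR_add_right[symmetric])
  also have "\<dots> = outer a + outer b" using p by (simp add: outer_rot0)
  finally show ?thesis .
qed

lemma quad_root: fixes qa qb B :: real assumes "0 < qa" "qb < 0"
  shows "\<exists>t. qa + 2 * t * B + t^2 * qb = 0"
proof -
  define s where "s = sqrt (B^2 - qa * qb)"
  have "qa * qb < 0" using assms by (rule mult_pos_neg)
  then have D: "0 \<le> B^2 - qa * qb" using zero_le_power2[of B] by linarith
  have ss: "s^2 = B^2 - qa * qb" using D s_def by simp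
  define t where "t = (-B - s) / qb"
  have qt: "qb * t = -B - s" using assms t_def by simp
  have "qb * (qa + 2 * t * B + t^2 * qb) = (qb * t)^2 + 2 * B * (qb * t) + qa * qb"
    by (simp add: algebra_simps power2_eq_square)
  also have "\<dots> = 0" unfolding qt using ss by (simp add: algebra_simps power2_eq_square)
  finally have "qa + 2 * t * B + t^2 * qb = 0" using assms by simp
  then show ?thesis by blast
qed

lemma sum_list_zero_signs: fixes xs :: "real list"
  assumes "sum_list xs = 0" "\<exists>x\<in>set xs. x \<noteq> 0"
  shows "\<exists>a\<in>set xs. 0 < a" "\<exists>b\<in>set xs. b < 0"
proof -
  show "\<exists>a\<in>set xs. 0 < a"
  proof (rule ccontr)
    assume "\<not> ?thesis"
    then have "\<forall>x\<in>set (map uminus xs). 0 \<le> x" by auto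
    moreover have "sum_list (map uminus xs) = 0" proof -
      have "sum_list (map uminus ys) = - sum_list ys" for ys :: "real list" by (induction ys) auto
      then show ?thesis using assms(1) by simp
    qed
    ultimately have "\<forall>x\<in>set (map uminus xs). x = 0" using sum_list_nonneg_eq_0_iff by blast
    then show False using assms(2) by auto
  qed
  show "\<exists>b\<in>set xs. b < 0"
  proof (rule ccontr)
    assume "\<not> ?thesis"
    then have "\<forall>x\<in>set xs. 0 \<le> x" by auto
    then have "\<forall>x\<in>set xs. x = 0" using sum_list_nonneg_eq_0_iff assms(1) by blast
    then show False using assms(2) by auto
  qed
qed

lemma sz: fixes M :: "real^'n^'n" assumes s: "sym_mat M"
  shows "sum_list (map (\<lambda>x. x \<bullet> (M *v x)) xs) = 0 \<Longrightarrow>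
    \<exists>ys. sum_list (map outer ys) = sum_list (map outer xs) \<and> (\<forall>y\<in>set ys. y \<bullet> (M *v y) = 0)"
proof (induction "length xs" arbitrary: xs rule: less_induct)
  case less
  let ?q = "\<lambda>x. x \<bullet> (M *v x)"
  show ?case
  proof (cases "\<forall>x\<in>set xs. ?q x = 0")
    case True then show ?thesis by blast
  next
    case False
    then have "\<exists>x\<in>set (map ?q xs). x \<noteq> 0" by auto
    from sum_list_zero_signs[OF less.prems this]
    obtain a b where ab: "a \<in> set xs" "b \<in> set xs" "0 < ?q a" "?q b < 0" by auto
    have "a \<noteq> b" using ab by auto
    define xs' where "xs' = remove1 b (remove1 a xs)"
    have b2: "b \<in> set (remove1 a xs)" using ab \<open>a \<noteq> b\<close> by (simp add: in_set_remove1)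
    have sumf: "sum_list (map f xs) = f a + f b + sum_list (map f xs')" for f :: "real^'n \<Rightarrow> 'b::ab_group_add"
      unfolding xs'_def using sum_list_map_remove1[OF ab(1), of f] sum_list_map_remove1[OF b2, of f]
      by (simp add: add.assoc)
    have l1: "length (remove1 a xs) = length xs - 1" by (simp add: length_remove1 ab(1))
    have l2: "length xs' = length (remove1 a xs) - 1" by (simp add: xs'_def length_remove1 b2)
    have l3: "0 < length (remove1 a xs)" by (rule length_pos_if_in_set[OF b2])
    have l4: "0 < length xs" by (rule length_pos_if_in_set[OF ab(1)])
    obtain t where t: "?q a + 2 * t * (a \<bullet> (M *v b)) + t^2 * ?q b = 0"
      using quad_root[OF ab(3) ab(4)] by blast
    define y where "y = (1/sqrt(1+t^2)) *\<^sub>R (a + t *\<^sub>R b)"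
    define z where "z = (1/sqrt(1+t^2)) *\<^sub>R (b - t *\<^sub>R a)"
    have oyz: "outer y + outer z = outer a + outer b" unfolding y_def z_def by (rule outer_rot)
    have qw: "?q (a + t *\<^sub>R b) = ?q a + 2*t*(a \<bullet> (M *v b)) + t^2 * ?q b"
      unfolding q_add[OF s] q_scale matrix_vector_mult_scaleR inner_scaleR_right by (simp add: mult.assoc power2_eq_square)
    have qy: "?q y = 0" unfolding y_def q_scale qw t by simp
    have "?q y + ?q z = ?q a + ?q b"
      using arg_cong[OF oyz, of "mat_inner M"] by (simp add: mat_inner_add mat_inner_outer)
    then have qz: "?q z = ?q a + ?q b" using qy by simp
    have "sum_list (map ?q (z # xs')) = 0" using less.prems sumf[of ?q] qz by simp
    moreover have "length (z # xs') < length xs" using l1 l2 l3 l4 by simp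
    ultimately obtain ys where ys: "sum_list (map outer ys) = sum_list (map outer (z # xs'))" "\<forall>y\<in>set ys. ?q y = 0"
      using less.hyps by blast
    have "sum_list (map outer (y # ys)) = sum_list (map outer xs)"
      using ys(1) sumf[of outer] oyz by (simp add: algebra_simps)
    moreover have "\<forall>w\<in>set (y # ys). ?q w = 0" using ys(2) qy by simp
    ultimately show ?thesis by blast
  qed
qed


lemma nonpos_sum_zero: fixes xs :: "real list"
  assumes "\<forall>x\<in>set xs. x \<le> 0" "0 \<le> sum_list xs" shows "\<forall>x\<in>set xs. x = 0"
  using assms
proof (induction xs)
  case Nil then show ?case by simp
next
  case (Cons a xs)
  have "sum_list xs \<le> 0" using Cons.prems(1) by (intro sum_list_nonpos) auto
  moreover have "a \<le> 0" using Cons.prems(1) by simp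
  ultimately have "a = 0" "0 \<le> sum_list xs" using Cons.prems(2) by auto
  then show ?case using Cons.IH Cons.prems(1) by auto
qed

lemma S_of_iff: "X \<in> S_of k M \<longleftrightarrow> psd X \<and> (\<forall>i\<in>{1..k}. 0 \<le> mat_inner (M i) X)"
  unfolding S_of_def psd_cone_def by simp

lemma good_family:
  fixes M :: "nat \<Rightarrow> real^'n^'n"
  assumes sym: "\<forall>i\<in>{1..k}. sym_mat (M i)"
    and pairs: "\<forall>i\<in>{1..k}. \<forall>j\<in>{1..k}. i \<noteq> j \<longrightarrow>
           (\<exists>\<alpha> \<beta>::real. (\<alpha>, \<beta>) \<noteq> (0, 0) \<and> psd (\<alpha> *\<^sub>R M i + \<beta> *\<^sub>R M j))"
    and XS: "X \<in> S_of k M" and i: "i \<in> {1..k}" and ind: "\<not> psd (M i)" "\<not> psd (- M i)"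
    and X: "X = sum_list (map outer ys)" and qi: "\<forall>y\<in>set ys. y \<bullet> (M i *v y) = 0"
    and j: "j \<in> {1..k}" and y: "y \<in> set ys"
  shows "0 \<le> y \<bullet> (M j *v y)"
proof (cases "j = i")
  case True then show ?thesis using qi y by simp
next
  case False
  then obtain \<alpha> \<beta> :: real where ab: "(\<alpha>, \<beta>) \<noteq> (0, 0)" "psd (\<alpha> *\<^sub>R M i + \<beta> *\<^sub>R M j)"
    using pairs i j by metis
  have lin: "0 \<le> \<alpha> * (x \<bullet> (M i *v x)) + \<beta> * (x \<bullet> (M j *v x))" for x
    using ab(2) unfolding psd_def q_lin by blast
  consider "\<beta> = 0" | "\<beta> > 0" | "\<beta> < 0" by linarith
  then show ?thesis
  proof cases
    case 1
    then have an: "\<alpha> \<noteq> 0" using ab(1) by simp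
    have e: "\<alpha> *\<^sub>R M i + \<beta> *\<^sub>R M j = \<alpha> *\<^sub>R M i" using 1 by simp
    show ?thesis
    proof (cases "\<alpha> > 0")
      case True
      have p: "psd (\<alpha> *\<^sub>R M i)" using ab(2) e by simp
      have "(1/\<alpha>) *\<^sub>R (\<alpha> *\<^sub>R M i) = M i" using True by simp
      then have "psd (M i)" using psd_scale[OF p, of "1/\<alpha>"] True by simp
      with ind show ?thesis by simp
    next
      case False
      then have "\<alpha> < 0" using an by simp
      have p: "psd (\<alpha> *\<^sub>R M i)" using ab(2) e by simp
      have "(-1/\<alpha>) *\<^sub>R (\<alpha> *\<^sub>R M i) = - M i" using \<open>\<alpha> < 0\<close> by simp
      then have "psd (- M i)" using psd_scale[OF p, of "-1/\<alpha>"] \<open>\<alpha> < 0\<close> by simp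
      with ind show ?thesis by simp
    qed
  next
    case 2
    then show ?thesis using lin[of y] qi y by (simp add: zero_le_mult_iff)
  next
    case 3
    have np: "\<forall>x\<in>set (map (\<lambda>x. x \<bullet> (M j *v x)) ys). x \<le> 0"
    proof
      fix v assume "v \<in> set (map (\<lambda>x. x \<bullet> (M j *v x)) ys)"
      then obtain x where x: "x \<in> set ys" "v = x \<bullet> (M j *v x)" by auto
      have "0 \<le> \<beta> * v" using lin[of x] qi x by simp
      then show "v \<le> 0" using 3 by (simp add: zero_le_mult_iff)
    qed
    have "0 \<le> sum_list (map (\<lambda>x. x \<bullet> (M j *v x)) ys)"
      using XS j unfolding S_of_iff X mat_inner_sum_list by blast
    from nonpos_sum_zero[OF np this] y show ?thesis by simp
  qed
qed
lemma ext_key: "X extreme_point_of Bs \<Longrightarrow> Z \<in> Bs \<Longrightarrow> W \<in> Bs \<Longrightarrow> 0 < u \<Longrightarrow> u < 1 \<Longrightarrow>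
   X = (1 - u) *\<^sub>R Z + u *\<^sub>R W \<Longrightarrow> Z = W"
proof (rule ccontr)
  assume e: "X extreme_point_of Bs" "Z \<in> Bs" "W \<in> Bs" "0 < u" "u < 1" "X = (1 - u) *\<^sub>R Z + u *\<^sub>R W" "Z \<noteq> W"
  then have "X \<in> open_segment Z W" unfolding in_segment(2) by blast
  with e(1,2,3) show False unfolding extreme_point_of_def by blast
qed

lemma combine:
  fixes M :: "nat \<Rightarrow> real^'n^'n"
  assumes ext: "X extreme_point_of (S_of k M \<inter> {X. trace X = 1})"
    and X: "X = sum_list (map outer zs)" and nz: "\<forall>z\<in>set zs. z \<noteq> 0"
    and good: "\<forall>j\<in>{1..k}. \<forall>z\<in>set zs. 0 \<le> z \<bullet> (M j *v z)"
  shows "X \<in> range outer"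
proof -
  have XB: "X \<in> S_of k M \<inter> {X. trace X = 1}" using ext unfolding extreme_point_of_def by (rule conjunct1)
  show ?thesis
  proof (cases zs)
    case Nil
    then have "X = 0" using X by simp
    moreover have "trace X = 1" using XB by simp
    ultimately show ?thesis by (simp add: trace_def)
  next
    case (Cons z zs')
    show ?thesis
    proof (cases zs')
      case Nil
      then show ?thesis using X Cons by simp
    next
      case (Cons w rest)
      have zs: "zs = z # w # rest" using Cons \<open>zs = z # zs'\<close> by simp
      define l where "l = z \<bullet> z"
      define R where "R = sum_list (map outer (w # rest))"
      have lp: "0 < l" using nz zs l_def by simp
      have tR: "trace R = sum_list (map (\<lambda>x. x \<bullet> x) (w # rest))" unfolding R_def by (rule trace_sum_list)
      have "0 \<le> sum_list (map (\<lambda>x. x \<bullet> x) rest)" by (intro sum_list_nonneg) auto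
      moreover have "0 < w \<bullet> w" using nz zs by simp
      moreover have "trace R = w \<bullet> w + sum_list (map (\<lambda>x. x \<bullet> x) rest)" using tR by simp
      ultimately have tRp: "0 < trace R" by linarith
      have XzR: "X = outer z + R" using X zs R_def by simp
      have "trace X = l + trace R" unfolding XzR trace_add trace_outer l_def by simp
      then have l1: "l + trace R = 1" using XB by simp
      then have ll: "l < 1" using tRp by simp
      define Z where "Z = (1/l) *\<^sub>R outer z"
      define W where "W = (1/(1-l)) *\<^sub>R R"
      have ZB: "Z \<in> S_of k M \<inter> {X. trace X = 1}"
      proof -
        have "psd Z" unfolding Z_def using lp by (intro psd_scale psd_outer) auto
        moreover have "\<forall>j\<in>{1..k}. 0 \<le> mat_inner (M j) Z"
          unfolding Z_def mat_inner_scale mat_inner_outer using good zs lp by simp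
        moreover have "trace Z = 1" unfolding Z_def trace_scale trace_outer using lp l_def by simp
        ultimately show ?thesis by (simp add: S_of_iff)
      qed
      have WB: "W \<in> S_of k M \<inter> {X. trace X = 1}"
      proof -
        have "psd W" unfolding W_def R_def using ll by (intro psd_scale psd_sum_list) auto
        moreover have "\<forall>j\<in>{1..k}. 0 \<le> mat_inner (M j) W"
        proof
          fix j assume j: "j \<in> {1..k}"
          have "0 \<le> sum_list (map (\<lambda>x. x \<bullet> (M j *v x)) (w # rest))"
            using good j zs by (intro sum_list_nonneg) auto
          then show "0 \<le> mat_inner (M j) W"
            unfolding W_def mat_inner_scale R_def mat_inner_sum_list using ll by simp
        qed
        moreover have "trace W = 1" unfolding W_def trace_scale using l1 ll by simp
        ultimately show ?thesis by (simp add: S_of_iff)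
      qed
      have "X = (1 - (1 - l)) *\<^sub>R Z + (1 - l) *\<^sub>R W"
        unfolding Z_def W_def XzR using lp ll by simp
      then have "Z = W" using ext_key[OF ext ZB WB, of "1 - l"] lp ll by simp
      then have "X = Z" using \<open>X = (1 - (1 - l)) *\<^sub>R Z + (1 - l) *\<^sub>R W\<close>
        by (simp add: scaleR_left_distrib[symmetric])
      also have "Z = outer ((1 / sqrt l) *\<^sub>R z)"
        unfolding Z_def outer_scale using lp by (simp add: power_divide)
      finally show ?thesis by simp
    qed
  qed
qed


lemma mv_uminus: fixes A :: "real^'n^'n" shows "(- A) *v x = - (A *v x)"
  by (simp add: matrix_vector_mult_def vec_eq_iff sum_negf)

lemma mid: fixes X H :: "'a::real_vector" shows "X = (1 - 1/2) *\<^sub>R (X + (-s) *\<^sub>R H) + (1/2) *\<^sub>R (X + s *\<^sub>R H)"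
  by (simp add: algebra_simps flip: scaleR_add_left)
lemma mid2: fixes X H :: "'a::real_vector" shows "X + (-s) *\<^sub>R H = X + s *\<^sub>R H \<Longrightarrow> s \<noteq> 0 \<Longrightarrow> H = 0"
  by (metis add_left_cancel scaleR_cancel_right minus_equation_iff scaleR_minus_left equal_neg_zero)

lemma caseB:
  fixes M :: "nat \<Rightarrow> real^'n^'n"
  assumes ext: "X extreme_point_of (S_of k M \<inter> {X. trace X = 1})"
    and semi: "\<forall>i\<in>{1..k}. mat_inner (M i) X = 0 \<longrightarrow> psd (M i) \<or> psd (- M i)"
  shows "X \<in> range outer"
proof -
  let ?B = "S_of k M \<inter> {X. trace X = 1}"
  have XB: "X \<in> ?B" using ext unfolding extreme_point_of_def by (rule conjunct1)
  then have XS: "psd X" "\<forall>i\<in>{1..k}. 0 \<le> mat_inner (M i) X" "trace X = 1" by (auto simp: S_of_iff)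
  have zero_q: "y \<bullet> (M i *v y) = 0"
    if ys: "X = sum_list (map outer ys)" and i: "i \<in> {1..k}" and m0: "mat_inner (M i) X = 0"
      and y: "y \<in> set ys" for ys i y
  proof -
    have sm: "sum_list (map (\<lambda>x. x \<bullet> (M i *v x)) ys) = 0" using m0 ys mat_inner_sum_list by metis
    from semi i m0 have "psd (M i) \<or> psd (- M i)" by blast
    then show ?thesis
    proof
      assume p: "psd (M i)"
      have "\<forall>x\<in>set (map (\<lambda>x. x \<bullet> (M i *v x)) ys). 0 \<le> x" using p unfolding psd_def by auto
      then have "\<forall>x\<in>set (map (\<lambda>x. x \<bullet> (M i *v x)) ys). x = 0" using sm sum_list_nonneg_eq_0_iff by blast
      then show ?thesis using y by simp
    next
      assume p: "psd (- M i)"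
      have "\<forall>x\<in>set (map (\<lambda>x. x \<bullet> (M i *v x)) ys). x \<le> 0"
      proof
        fix v assume "v \<in> set (map (\<lambda>x. x \<bullet> (M i *v x)) ys)"
        then obtain x where x: "v = x \<bullet> (M i *v x)" by auto
        have "0 \<le> x \<bullet> ((- M i) *v x)" using p unfolding psd_def by blast
        then show "v \<le> 0" using x by (simp add: mv_uminus)
      qed
      from nonpos_sum_zero[OF this] sm y show ?thesis by simp
    qed
  qed
  have main: "\<forall>ys. X = sum_list (map outer ys) \<longrightarrow> length ys = n \<longrightarrow> X \<in> range outer" for n
  proof (induction n rule: less_induct)
    case (less n)
    show ?case
    proof (intro allI impI)
      fix ys assume X: "X = sum_list (map outer ys)" and len: "length ys = n"
      show "X \<in> range outer"
      proof (cases ys)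
        case Nil
        then have "X = outer 0" using X outer_zero by simp
        then show ?thesis by simp
      next
        case (Cons y1 ys')
        show ?thesis
        proof (cases ys')
          case Nil
          then show ?thesis using X Cons by simp
        next
          case (Cons y2 rest)
          have ys: "ys = y1 # y2 # rest" using Cons \<open>ys = y1 # ys'\<close> by simp
          show ?thesis
          proof (cases "y1 = 0 \<or> y2 = 0")
            case True
            then obtain ys2 where "X = sum_list (map outer ys2)" "length ys2 < n"
            proof
              assume "y1 = 0"
              then show ?thesis using that[of "y2 # rest"] X ys len outer_zero by simp
            next
              assume "y2 = 0"
              then show ?thesis using that[of "y1 # rest"] X ys len outer_zero by simp
            qed
            then show ?thesis using less by blast
          next
            case False
            define a where "a = y2 \<bullet> y2"
            define b where "b = y1 \<bullet> y1"
            have ap: "0 < a" using False a_def by simp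
            have bp: "0 < b" using False b_def by simp
            define H where "H = a *\<^sub>R outer y1 + (-b) *\<^sub>R outer y2"
            define R where "R = sum_list (map outer rest)"
            have XR: "X = outer y1 + outer y2 + R" using X ys R_def by (simp add: add.assoc)
            show ?thesis
            proof (cases "H = 0")
              case True
              have "a *\<^sub>R outer y1 = H + b *\<^sub>R outer y2" unfolding H_def by simp
              then have h: "a *\<^sub>R outer y1 = b *\<^sub>R outer y2" using True by simp
              have "outer y2 = (1/b) *\<^sub>R (b *\<^sub>R outer y2)" using bp by simp
              also have "\<dots> = (a / b) *\<^sub>R outer y1" unfolding h[symmetric] by simp
              finally have o2: "outer y2 = (a / b) *\<^sub>R outer y1" .
              have "outer y1 + outer y2 = outer (sqrt (1 + a/b) *\<^sub>R y1)"
                unfolding outer_scale o2 using ap bp by (simp add: algebra_simps)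
              then have "X = sum_list (map outer (sqrt (1 + a/b) *\<^sub>R y1 # rest))"
                using XR R_def by simp
              moreover have "length (sqrt (1 + a/b) *\<^sub>R y1 # rest) < n" using len ys by simp
              ultimately show ?thesis using less by blast
            next
              case False
              define m where "m i = mat_inner (M i) X" for i
              define d where "d i = a * (y1 \<bullet> (M i *v y1)) - b * (y2 \<bullet> (M i *v y2))" for i
              define I0 where "I0 = {i\<in>{1..k}. 0 < m i}"
              define Ss where "Ss = insert (1/(a+b+1)) ((\<lambda>i. m i / (\<bar>d i\<bar> + 1)) ` I0)"
              define s where "s = Min Ss"
              have fin: "finite Ss" unfolding Ss_def I0_def by simp
              have sp: "0 < s" unfolding s_def using fin ap bp
                by (subst Min_gr_iff) (auto simp: Ss_def I0_def add_pos_pos)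
              have s1: "s \<le> 1/(a+b+1)" unfolding s_def using fin by (simp add: Ss_def)
              have s2: "s \<le> m i / (\<bar>d i\<bar> + 1)" if "i \<in> I0" for i
                unfolding s_def using fin that by (simp add: Ss_def)
              have pert: "X + c *\<^sub>R H \<in> ?B" if c: "\<bar>c\<bar> \<le> s" for c
              proof -
                have s3: "s * (a+b+1) \<le> 1" using s1 ap bp by (simp add: field_simps)
                have "s * a \<le> s * (a+b+1)" using sp bp by (intro mult_left_mono) auto
                then have sa: "s * a \<le> 1" using s3 by linarith
                have "s * b \<le> s * (a+b+1)" using sp ap by (intro mult_left_mono) auto
                then have sb: "s * b \<le> 1" using s3 by linarith
                have cs: "-s \<le> c" "c \<le> s" using c by auto
                have "-s * a \<le> c * a" using cs ap by (intro mult_right_mono) auto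
                then have ca: "0 \<le> 1 + c * a" using sa by linarith
                have "c * b \<le> s * b" using cs bp by (intro mult_right_mono) auto
                then have cb: "0 \<le> 1 - c * b" using sb by linarith
                have eq: "X + c *\<^sub>R H = (1 + c * a) *\<^sub>R outer y1 + (1 - c * b) *\<^sub>R outer y2 + R"
                  unfolding XR H_def by (simp add: algebra_simps)
                have "psd (X + c *\<^sub>R H)" unfolding eq R_def
                  using ca cb by (intro psd_add psd_scale psd_outer psd_sum_list) auto
                moreover have "0 \<le> mat_inner (M i) (X + c *\<^sub>R H)" if i: "i \<in> {1..k}" for i
                proof -
                  have e: "mat_inner (M i) (X + c *\<^sub>R H) = m i + c * d i"
                    by (simp only: H_def scaleR_add_right mat_inner_add mat_inner_scale mat_inner_outer m_def d_def scaleR_scaleR) (simp add: algebra_simps)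
                  show ?thesis
                  proof (cases "m i = 0")
                    case True
                    have y1: "y1 \<in> set ys" "y2 \<in> set ys" using ys by auto
                    have "d i = 0" unfolding d_def using zero_q[OF X i] True m_def y1 by simp
                    then show ?thesis using e True by simp
                  next
                    case False
                    then have mp: "0 < m i" using XS(2) i m_def by force
                    then have "i \<in> I0" using i I0_def by simp
                    then have "s * (\<bar>d i\<bar> + 1) \<le> m i" using s2 by (simp add: field_simps)
                    moreover have "\<bar>c * d i\<bar> \<le> s * \<bar>d i\<bar>" using c by (simp add: abs_mult mult_right_mono)
                    ultimately have "s * \<bar>d i\<bar> + s \<le> m i" "\<bar>c * d i\<bar> \<le> s * \<bar>d i\<bar>"
                      by (simp_all add: algebra_simps)
                    moreover have "- (c * d i) \<le> \<bar>c * d i\<bar>" by (rule abs_ge_minus_self)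
                    ultimately show ?thesis using e sp by linarith
                  qed
                qed
                moreover have "trace (X + c *\<^sub>R H) = 1"
                  using XS(3) by (simp only: H_def scaleR_add_right trace_add trace_scale trace_outer scaleR_scaleR a_def b_def) (simp add: algebra_simps)
                ultimately show ?thesis by (simp add: S_of_iff)
              qed
              have Z: "X + (-s) *\<^sub>R H \<in> ?B" using pert[of "-s"] sp by linarith
              have W: "X + s *\<^sub>R H \<in> ?B" using pert[of s] sp by linarith
              have "X + (-s) *\<^sub>R H = X + s *\<^sub>R H" using ext_key[OF ext Z W, of "1/2"] mid[of X s H] by simp
              then have "H = 0" using sp by (intro mid2) auto
              then show ?thesis using sp False by simp
            qed
          qed
        qed
      qed
    qed
  qed
  obtain xs where "X = sum_list (map outer xs)" using psd_decomp XS(1) by blast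
  then show ?thesis using main by blast
qed


lemma filter_nz_outer: "sum_list (map outer (filter (\<lambda>y. y \<noteq> 0) ys)) = sum_list (map outer ys)"
  by (induction ys) (auto simp: outer_zero)

lemma ext_rank1:
  fixes M :: "nat \<Rightarrow> real^'n^'n"
  assumes sym: "\<forall>i\<in>{1..k}. sym_mat (M i)"
    and pairs: "\<forall>i\<in>{1..k}. \<forall>j\<in>{1..k}. i \<noteq> j \<longrightarrow>
           (\<exists>\<alpha> \<beta>::real. (\<alpha>, \<beta>) \<noteq> (0, 0) \<and> psd (\<alpha> *\<^sub>R M i + \<beta> *\<^sub>R M j))"
    and ext: "X extreme_point_of (S_of k M \<inter> {X. trace X = 1})"
  shows "X \<in> range outer"
proof (cases "\<exists>i\<in>{1..k}. mat_inner (M i) X = 0 \<and> \<not> psd (M i) \<and> \<not> psd (- M i)")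
  case True
  then obtain i where i: "i \<in> {1..k}" "mat_inner (M i) X = 0" "\<not> psd (M i)" "\<not> psd (- M i)" by blast
  have XB: "X \<in> S_of k M \<inter> {X. trace X = 1}" using ext unfolding extreme_point_of_def by (rule conjunct1)
  then have XS: "X \<in> S_of k M" by simp
  then obtain xs where xs: "X = sum_list (map outer xs)" using psd_decomp by (auto simp: S_of_iff)
  have "sum_list (map (\<lambda>x. x \<bullet> (M i *v x)) xs) = 0" using i(2) xs mat_inner_sum_list by metis
  from sz[OF _ this] sym i(1) obtain ys where ys: "sum_list (map outer ys) = sum_list (map outer xs)"
     "\<forall>y\<in>set ys. y \<bullet> (M i *v y) = 0" by blast
  have Xys: "X = sum_list (map outer ys)" using ys xs by simp
  have good: "\<forall>j\<in>{1..k}. \<forall>z\<in>set (filter (\<lambda>y. y \<noteq> 0) ys). 0 \<le> z \<bullet> (M j *v z)"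
    using good_family[OF sym pairs XS i(1) i(3) i(4) Xys ys(2)] by auto
  show ?thesis
    by (rule combine[OF ext _ _ good]) (auto simp: filter_nz_outer Xys)
next
  case False
  then have "\<forall>i\<in>{1..k}. mat_inner (M i) X = 0 \<longrightarrow> psd (M i) \<or> psd (- M i)" by blast
  then show ?thesis by (rule caseB[OF ext])
qed

lemma linear_trace: "linear (trace :: real^'n^'n \<Rightarrow> real)"
  by (rule linearI) (simp_all add: trace_add trace_scale)
lemma linear_mat_inner: "linear (mat_inner (M::real^'n^'n))"
  by (rule linearI) (simp_all add: mat_inner_add mat_inner_scale)
lemma linear_q: "linear (\<lambda>X::real^'n^'n. x \<bullet> (X *v x))"
  by (rule linearI) (simp_all add: matrix_vector_mult_add_rdistrib inner_add_right flip: scaleR_matrix_vector_assoc)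
lemma linear_transpose: "linear (transpose :: real^'n^'n \<Rightarrow> real^'n^'n)"
  by (rule linearI) (simp_all add: transpose_scalar, simp add: transpose_def vec_eq_iff)

lemma cont_lin: fixes f :: "real^'n^'n \<Rightarrow> 'b::real_normed_vector"
  shows "linear f \<Longrightarrow> continuous_on UNIV f"
  by (simp add: linear_conv_bounded_linear linear_continuous_on)

lemma closed_psd: "closed {X::real^'n^'n. psd X}"
proof -
  have "{X::real^'n^'n. psd X} = {X. transpose X = X} \<inter> {X. \<forall>x. 0 \<le> x \<bullet> (X *v x)}"
    unfolding psd_def sym_mat_def by auto
  moreover have "closed {X::real^'n^'n. transpose X = X}"
    by (rule closed_Collect_eq) (auto intro: cont_lin linear_transpose continuous_on_id)
  moreover have "closed {X::real^'n^'n. \<forall>x. 0 \<le> x \<bullet> (X *v x)}"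
    by (intro closed_Collect_all closed_Collect_le continuous_on_const cont_lin linear_q)
  ultimately show ?thesis by auto
qed

lemma closed_S: "closed (S_of k (M::nat \<Rightarrow> real^'n^'n))"
proof -
  have "S_of k M = {X. psd X} \<inter> (\<Inter>i\<in>{1..k}. {X. 0 \<le> mat_inner (M i) X})"
    by (auto simp: S_of_iff)
  moreover have "closed (\<Inter>i\<in>{1..k}. {X. 0 \<le> mat_inner (M i) X})"
    by (intro closed_INT ballI closed_Collect_le continuous_on_const cont_lin linear_mat_inner)
  ultimately show ?thesis using closed_psd by auto
qed

lemma convex_S: "convex (S_of k (M::nat \<Rightarrow> real^'n^'n))"
  unfolding convex_def
  by (auto intro!: psd_add psd_scale simp: S_of_iff mat_inner_add mat_inner_scale add_nonneg_nonneg)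

lemma cone_S: "cone (S_of k (M::nat \<Rightarrow> real^'n^'n))"
  unfolding cone_def by (auto intro!: psd_scale simp: S_of_iff mat_inner_scale)

lemma diag_le_trace: fixes X :: "real^'n^'n" assumes "psd X" shows "X$i$i \<le> trace X"
  unfolding trace_def by (rule member_le_sum) (auto simp: psd_diag[OF assms])

lemma compact_B: "compact (S_of k (M::nat \<Rightarrow> real^'n^'n) \<inter> {X. trace X = 1})"
  unfolding compact_eq_bounded_closed
proof (rule conjI[rotated])
  show "closed (S_of k M \<inter> {X. trace X = 1})"
    by (intro closed_Int closed_S closed_Collect_eq continuous_on_const cont_lin linear_trace)
  show "bounded (S_of k M \<inter> {X. trace X = 1})"
    unfolding bounded_iff
  proof (intro exI ballI)
    fix X assume "X \<in> S_of k M \<inter> {X. trace X = 1}"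
    then have p: "psd X" and t: "trace X = 1" by (auto simp: S_of_iff)
    have e: "\<bar>X$i$j\<bar> \<le> 1" for i j
      using psd_off[OF p, of i j] diag_le_trace[OF p, of i] diag_le_trace[OF p, of j] t by linarith
    have "norm X \<le> (\<Sum>i\<in>UNIV. norm (X$i))" unfolding norm_vec_def by (rule L2_set_le_sum) simp
    also have "\<dots> \<le> (\<Sum>i\<in>(UNIV::'n set). \<Sum>j\<in>(UNIV::'n set). 1)"
    proof (rule sum_mono)
      fix i
      have "norm (X$i) \<le> (\<Sum>j\<in>UNIV. \<bar>X$i$j\<bar>)" by (rule norm_le_l1_cart)
      also have "\<dots> \<le> (\<Sum>j\<in>(UNIV::'n set). 1)" by (rule sum_mono) (rule e)
      finally show "norm (X$i) \<le> (\<Sum>j\<in>(UNIV::'n set). 1)" .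
    qed
    finally show "norm X \<le> (\<Sum>i\<in>(UNIV::'n set). \<Sum>j\<in>(UNIV::'n set). 1::real)" .
  qed
qed

lemma trace_zero_psd: fixes X :: "real^'n^'n" assumes "psd X" "trace X = 0" shows "X = 0"
proof -
  have "\<forall>i. X$i$i = 0" using diag_le_trace[OF assms(1)] psd_diag[OF assms(1)] assms(2)
    by (metis order_antisym)
  then show ?thesis using psd_zero_diag assms(1) by blast
qed

lemma convex_B: "convex (S_of k (M::nat \<Rightarrow> real^'n^'n) \<inter> {X. trace X = 1})"
proof -
  have "convex {X::real^'n^'n. trace X = 1}"
    unfolding convex_def by (auto simp: trace_add trace_scale)
  then show ?thesis using convex_S by (rule convex_Int[rotated])
qed

theorem proposition3p3:
  fixes k :: nat and M :: "nat \<Rightarrow> real^'n^'n"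
  assumes "k \<ge> 2"
    and "\<forall>i\<in>{1..k}. sym_mat (M i)"
    and "\<forall>i\<in>{1..k}. \<forall>j\<in>{1..k}. i \<noteq> j \<longrightarrow>
           (\<exists>\<alpha> \<beta>::real. (\<alpha>, \<beta>) \<noteq> (0, 0) \<and> psd (\<alpha> *\<^sub>R M i + \<beta> *\<^sub>R M j))"
  shows "rog (S_of k M)"
proof -
  let ?S = "S_of k M"
  let ?B = "S_of k M \<inter> {X. trace X = 1}"
  let ?R = "?S \<inter> range outer"
  have sub: "?S \<subseteq> psd_cone" unfolding psd_cone_def by (auto simp: S_of_iff)
  have "?S \<subseteq> convex hull ?R"
  proof
    fix X assume XS: "X \<in> ?S"
    then have p: "psd X" by (simp add: S_of_iff)
    have t0: "0 \<le> trace X" using diag_le_trace[OF p] psd_diag[OF p] by (meson order_trans)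
    show "X \<in> convex hull ?R"
    proof (cases "trace X = 0")
      case True
      then have "X = outer 0" using trace_zero_psd[OF p] outer_zero by simp
      then have "X \<in> ?R" using XS by simp
      then show ?thesis by (rule hull_inc)
    next
      case False
      define t where "t = trace X"
      have tp: "0 < t" using t0 False t_def by simp
      define Y where "Y = (1/t) *\<^sub>R X"
      have YB: "Y \<in> ?B"
        using cone_S[of k M] XS tp unfolding cone_def Y_def
        by (simp add: trace_scale t_def)
      have KM: "?B = convex hull {x. x extreme_point_of ?B}"
        by (rule Krein_Milman_Minkowski[OF compact_B convex_B])
      have "{x. x extreme_point_of ?B} \<subseteq> ?R"
      proof
        fix x assume "x \<in> {x. x extreme_point_of ?B}"
        then have e: "x extreme_point_of ?B" by simp
        then have "x \<in> ?B" unfolding extreme_point_of_def by (rule conjunct1)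
        moreover have "x \<in> range outer" by (rule ext_rank1[OF assms(2) assms(3) e])
        ultimately show "x \<in> ?R" by simp
      qed
      then have "Y \<in> convex hull ?R" using KM YB hull_mono by blast
      then have "t *\<^sub>R Y \<in> (\<lambda>x. t *\<^sub>R x) ` (convex hull ?R)" by blast
      then have XY: "X \<in> convex hull ((\<lambda>x. t *\<^sub>R x) ` ?R)"
        unfolding convex_hull_scaling Y_def using tp by simp
      have "(\<lambda>x. t *\<^sub>R x) ` ?R \<subseteq> ?R"
      proof
        fix w assume "w \<in> (\<lambda>x. t *\<^sub>R x) ` ?R"
        then obtain z where z: "outer z \<in> ?S" "w = t *\<^sub>R outer z" by auto
        have "w \<in> ?S" using cone_S[of k M] z tp unfolding cone_def by simp
        moreover have "w = outer (sqrt t *\<^sub>R z)" using z(2) tp by (simp add: outer_scale)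
        ultimately show "w \<in> ?R" by simp
      qed
      then show ?thesis using XY hull_mono by blast
    qed
  qed
  moreover have "convex hull ?R \<subseteq> ?S" by (rule hull_minimal) (auto simp: convex_S)
  ultimately have "?S = convex hull ?R" by blast
  then show ?thesis unfolding rog_def using closed_S convex_S cone_S sub by blast
qed

end
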